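(* Let $T_1^f$ and $T_2^g$ be merge trees and let $\varepsilon \ge 0$. Then $d_I(T_1^f, T_2^g) \le \varepsilon$ if and only if there exists an $\varepsilon$-good map $\alpha: |T_1| \to |T_2|$.
   Context: A merge tree $T^h$ is a finite rooted tree $T$ together with a continuous function $h: |T| \to \mathbb{R}$ on its underlying space $|T|$ (each edge viewed as a segment, so interior points of edges are points of $|T|$) such that $h$ is decreasing along every root-to-leaf path; the tree is modified by attaching to the root a ray going upward along which $h$ increases to $+\infty$ (all merge trees are taken in this modified form). For points $u,v$, write $u \succeq v$ if $u$ is an ancestor of $v$ (possibly $u=v$). For $\varepsilon \ge 0$, $u^{\varepsilon}$ denotes the unique ancestor of $u$ with $h(u^\varepsilon) - h(u) = \varepsilon$. Given merge trees $T_1^f$ and $T_2^g$, a pair of continuous maps $\alpha: |T_1| \to |T_2|$, $\beta: |T_2| \to |T_1|$ is $\varepsilon$-compatible if for all $u \in |T_1|$: $g(\alpha(u)) = f(u)+\varepsilon$ and $\beta(\alpha(u)) = u^{2\varepsilon}$; and for all $w \in |T_2|$: $f(\beta(w)) = g(w) + \varepsilon$ and $\alpha(\beta(w)) = w^{2\varepsilon}$. The interleaving distance is $d_I(T_1^f,T_2^g) = \inf\{\varepsilon : \text{there exists a pair of } \varepsilon\text{-compatible maps}\}$. A continuous map $\alpha: |T_1| \to |T_2|$ is $\varepsilon$-good if: (P1) $g(\alpha(u)) = f(u) + \varepsilon$ for all $u \in |T_1|$; (P2) whenever $\alpha(u_1) \succeq \alpha(u_2)$, we have $u_1^{2\varepsilon}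 \succeq u_2^{2\varepsilon}$; (P3) for every $w \in |T_2| \setminus \mathrm{Im}(\alpha)$, $|g(w^F) - g(w)| \le 2\varepsilon$, where $w^F$ is the lowest ancestor of $w$ lying in $\mathrm{Im}(\alpha)$. *)

theory Defs
  imports Main "HOL-Analysis.Analysis"
begin

text \<open>The underlying space |T| (with the extra upward ray at
  the root) is realised as the set of pairs (v, r): the point on the edge from v up to
  par v (or on the ray, if v is the root) at height r.  The height function h is snd.\<close>

record 'v mtree =
  verts :: "'v set"
  par :: "'v \<Rightarrow> 'v"
  root :: "'v"
  hgt :: "'v \<Rightarrow> real"

definition merge_tree :: "'v mtree \<Rightarrow> bool" where
  "merge_tree T \<longleftrightarrow> finite (verts T) \<and> root T \<in> verts T \<and> par T (root T) = root T \<and>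
     (\<forall>v \<in> verts T - {root T}. par T v \<in> verts T \<and> hgt T v < hgt T (par T v))"

definition pts :: "'v mtree \<Rightarrow> ('v \<times> real) set" where
  "pts T = {(v, r). v \<in> verts T \<and> hgt T v \<le> r \<and> (v \<noteq> root T \<longrightarrow> r < hgt T (par T v))}"

definition vanc :: "'v mtree \<Rightarrow> 'v \<Rightarrow> 'v \<Rightarrow> bool" where
  "vanc T w v \<longleftrightarrow> (\<exists>n. (par T ^^ n) v = w)"

definition anc :: "'v mtree \<Rightarrow> 'v \<times> real \<Rightarrow> 'v \<times> real \<Rightarrow> bool" where
  "anc T x y \<longleftrightarrow> x \<in> pts T \<and> y \<in> pts T \<and> vanc T (fst x) (fst y) \<and> snd y \<le> snd x"

definition shift :: "'v mtree \<Rightarrow> 'v \<times> real \<Rightarrow> real \<Rightarrow> 'v \<times> real" where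
  "shift T u e = (THE w. anc T w u \<and> snd w = snd u + e)"

text \<open>Path (tree) metric on |T|, edges having length equal to their height difference;
  it induces the standard topology of the geometric realisation.\<close>
definition lca_height :: "'v mtree \<Rightarrow> 'v \<times> real \<Rightarrow> 'v \<times> real \<Rightarrow> real" where
  "lca_height T x y = Inf {snd z | z. anc T z x \<and> anc T z y}"

definition tdist :: "'v mtree \<Rightarrow> 'v \<times> real \<Rightarrow> 'v \<times> real \<Rightarrow> real" where
  "tdist T x y = (lca_height T x y - snd x) + (lca_height T x y - snd y)"

definition cont_map :: "'a mtree \<Rightarrow> 'b mtree \<Rightarrow> ('a \<times> real \<Rightarrow> 'b \<times> real) \<Rightarrow> bool" where
  "cont_map T1 T2 f \<longleftrightarrow> (\<forall>x \<in> pts T1. f x \<in> pts T2) \<and>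
     (\<forall>x \<in> pts T1. \<forall>e>0. \<exists>d>0. \<forall>y \<in> pts T1. tdist T1 y x < d \<longrightarrow> tdist T2 (f y) (f x) < e)"

definition compatible ::
  "'a mtree \<Rightarrow> 'b mtree \<Rightarrow> real \<Rightarrow> ('a \<times> real \<Rightarrow> 'b \<times> real) \<Rightarrow> ('b \<times> real \<Rightarrow> 'a \<times> real) \<Rightarrow> bool" where
  "compatible T1 T2 e \<alpha> \<beta> \<longleftrightarrow> cont_map T1 T2 \<alpha> \<and> cont_map T2 T1 \<beta> \<and>
     (\<forall>u \<in> pts T1. snd (\<alpha> u) = snd u + e \<and> \<beta> (\<alpha> u) = shift T1 u (2 * e)) \<and>
     (\<forall>w \<in> pts T2. snd (\<beta> w) = snd w + e \<and> \<alpha> (\<beta> w) = shift T2 w (2 * e))"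

definition interleaving_dist :: "'a mtree \<Rightarrow> 'b mtree \<Rightarrow> real" where
  "interleaving_dist T1 T2 = Inf {e. 0 \<le> e \<and> (\<exists>\<alpha> \<beta>. compatible T1 T2 e \<alpha> \<beta>)}"

definition lowest_anc_in :: "'v mtree \<Rightarrow> ('v \<times> real) set \<Rightarrow> 'v \<times> real \<Rightarrow> 'v \<times> real \<Rightarrow> bool" where
  "lowest_anc_in T S w z \<longleftrightarrow> z \<in> S \<and> anc T z w \<and> (\<forall>z' \<in> S. anc T z' w \<longrightarrow> anc T z' z)"

definition good_map :: "'a mtree \<Rightarrow> 'b mtree \<Rightarrow> real \<Rightarrow> ('a \<times> real \<Rightarrow> 'b \<times> real) \<Rightarrow> bool" where
  "good_map T1 T2 e \<alpha> \<longleftrightarrow> cont_map T1 T2 \<alpha> \<and>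
     (\<forall>u \<in> pts T1. snd (\<alpha> u) = snd u + e) \<and>
     (\<forall>u1 \<in> pts T1. \<forall>u2 \<in> pts T1. anc T2 (\<alpha> u1) (\<alpha> u2) \<longrightarrow>
        anc T1 (shift T1 u1 (2 * e)) (shift T1 u2 (2 * e))) \<and>
     (\<forall>w \<in> pts T2 - \<alpha> ` pts T1. \<exists>wF. lowest_anc_in T2 (\<alpha> ` pts T1) w wF \<and>
        \<bar>snd wF - snd w\<bar> \<le> 2 * e)"

end

theory Submission
  imports Defs "HOL-Library.FuncSet"
begin

lemma mt_par_in: "merge_tree T \<Longrightarrow> v \<in> verts T \<Longrightarrow> par T v \<in> verts T"
  unfolding merge_tree_def by (cases "v = root T") auto

lemma mt_hgt_par: "merge_tree T \<Longrightarrow> v \<in> verts T \<Longrightarrow> v \<noteq> root T \<Longrightarrow> hgt T v < hgt T (par T v)"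
  unfolding merge_tree_def by auto

lemma mt_root: "merge_tree T \<Longrightarrow> root T \<in> verts T" "merge_tree T \<Longrightarrow> par T (root T) = root T"
  "merge_tree T \<Longrightarrow> finite (verts T)"
  unfolding merge_tree_def by auto

lemma funpow_in_hgt:
  assumes "merge_tree T" "v \<in> verts T"
  shows "(par T ^^ n) v \<in> verts T \<and> hgt T v \<le> hgt T ((par T ^^ n) v)"
proof (induction n)
  case 0 then show ?case using assms by simp
next
  case (Suc n)
  let ?w = "(par T ^^ n) v"
  have "par T ?w \<in> verts T" using Suc mt_par_in[OF assms(1)] by blast
  moreover have "hgt T ?w \<le> hgt T (par T ?w)"
    using Suc mt_hgt_par[OF assms(1)] mt_root(2)[OF assms(1)] by (cases "?w = root T") force+
  ultimately show ?case using Suc by simp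
qed

lemma funpow_root: "merge_tree T \<Longrightarrow> (par T ^^ n) (root T) = root T"
  by (induction n) (auto simp: mt_root)

lemma vanc_refl: "vanc T v v"
  unfolding vanc_def by (rule exI[of _ 0]) simp

lemma vanc_trans: "vanc T a b \<Longrightarrow> vanc T b c \<Longrightarrow> vanc T a c"
  unfolding vanc_def by (metis comp_apply funpow_add)

lemma vanc_par: "vanc T (par T v) v"
  unfolding vanc_def by (rule exI[of _ 1]) simp

lemma vanc_cmp: "vanc T a v \<Longrightarrow> vanc T b v \<Longrightarrow> vanc T a b \<or> vanc T b a"
proof -
  assume "vanc T a v" "vanc T b v"
  then obtain n m where n: "(par T ^^ n) v = a" and m: "(par T ^^ m) v = b" unfolding vanc_def by blast
  show ?thesis
  proof (cases "n \<le> m")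
    case True
    then have "(par T ^^ (m - n)) a = b" using n m by (metis comp_apply funpow_add le_add_diff_inverse2)
    then show ?thesis unfolding vanc_def by blast
  next
    case False
    then have "(par T ^^ (n - m)) b = a" using n m
      by (metis comp_apply funpow_add le_add_diff_inverse2 nat_le_linear)
    then show ?thesis unfolding vanc_def by blast
  qed
qed

lemma vanc_hgt:
  assumes "merge_tree T" "v \<in> verts T" "vanc T w v"
  shows "w \<in> verts T \<and> hgt T v \<le> hgt T w"
proof -
  obtain n where "(par T ^^ n) v = w" using assms(3) unfolding vanc_def by blast
  then show ?thesis using funpow_in_hgt[OF assms(1,2), of n] by simp
qed

lemma vanc_strict:
  assumes "merge_tree T" "b \<in> verts T" "vanc T a b" "a \<noteq> b"
  shows "b \<noteq> root T \<and> hgt T (par T b) \<le> hgt T a"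
proof -
  obtain n where n: "(par T ^^ n) b = a" using assms unfolding vanc_def by blast
  have "n \<noteq> 0"
  proof
    assume "n = 0" with n assms(4) show False by simp
  qed
  then obtain k where k: "n = Suc k" by (cases n) auto
  have "(par T ^^ k) (par T b) = a" using n k by (simp add: funpow_Suc_right del: funpow.simps)
  then have "hgt T (par T b) \<le> hgt T a"
    using funpow_in_hgt[OF assms(1) mt_par_in[OF assms(1,2)]] by blast
  moreover have "b \<noteq> root T"
  proof
    assume "b = root T"
    then have "a = root T" using n funpow_root[OF assms(1), of n] by simp
    then show False using \<open>b = root T\<close> assms(4) by simp
  qed
  ultimately show ?thesis by blast
qed

lemma vanc_root:
  assumes "merge_tree T" "v \<in> verts T"
  shows "vanc T (root T) v"
proof -
  define M where "M w = card {x \<in> verts T. hgt T w < hgt T x}" for w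
  have "\<forall>v. v \<in> verts T \<longrightarrow> M v = k \<longrightarrow> vanc T (root T) v" for k
  proof (induction k rule: less_induct)
    case (less k)
    show ?case
    proof (intro allI impI)
      fix v assume v: "v \<in> verts T" "M v = k"
      show "vanc T (root T) v"
      proof (cases "v = root T")
        case True then show ?thesis by (simp add: vanc_refl)
      next
        case False
        have p: "par T v \<in> verts T" using mt_par_in[OF assms(1) v(1)] .
        have h: "hgt T v < hgt T (par T v)" using mt_hgt_par[OF assms(1) v(1) False] .
        have "{x \<in> verts T. hgt T (par T v) < hgt T x} \<subset> {x \<in> verts T. hgt T v < hgt T x}"
          using h p by auto
        moreover have "finite {x \<in> verts T. hgt T v < hgt T x}" using mt_root(3)[OF assms(1)] by simp
        ultimately have "M (par T v) < M v" unfolding M_def by (meson psubset_card_mono)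
        then have "M (par T v) < k" using v(2) by simp
        then have "vanc T (root T) (par T v)" using less.IH p by blast
        then show ?thesis by (rule vanc_trans[OF _ vanc_par])
      qed
    qed
  qed
  then show ?thesis using assms M_def by blast
qed

lemma pts_iff: "(v, r) \<in> pts T \<longleftrightarrow> v \<in> verts T \<and> hgt T v \<le> r \<and> (v \<noteq> root T \<longrightarrow> r < hgt T (par T v))"
  unfolding pts_def by simp

lemma ptsD: "x \<in> pts T \<Longrightarrow> fst x \<in> verts T \<and> hgt T (fst x) \<le> snd x \<and> (fst x \<noteq> root T \<longrightarrow> snd x < hgt T (par T (fst x)))"
  by (cases x) (simp add: pts_iff)

lemma anc_refl: "x \<in> pts T \<Longrightarrow> anc T x x"
  unfolding anc_def by (simp add: vanc_refl)

lemma anc_trans: "anc T a b \<Longrightarrow> anc T b c \<Longrightarrow> anc T a c"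
  unfolding anc_def using vanc_trans by fastforce

lemma anc_pts: "anc T a b \<Longrightarrow> a \<in> pts T" "anc T a b \<Longrightarrow> b \<in> pts T"
  "anc T a b \<Longrightarrow> snd b \<le> snd a"
  unfolding anc_def by auto

lemma anc_same_edge:
  assumes "merge_tree T" "anc T z p" "fst p = root T \<or> snd z < hgt T (par T (fst p))"
  shows "fst z = fst p"
proof (rule ccontr)
  assume ne: "fst z \<noteq> fst p"
  have p: "fst p \<in> verts T" using assms(2) ptsD unfolding anc_def by blast
  have "vanc T (fst z) (fst p)" using assms(2) unfolding anc_def by blast
  from vanc_strict[OF assms(1) p this ne] have "fst p \<noteq> root T" "hgt T (par T (fst p)) \<le> hgt T (fst z)" by auto
  moreover have "hgt T (fst z) \<le> snd z" using assms(2) ptsD unfolding anc_def by blast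
  ultimately show False using assms(3) by auto
qed

lemma anc_same_edge2:
  assumes "merge_tree T" "anc T z g" "hgt T (fst z) \<le> snd g"
  shows "fst z = fst g"
proof (rule ccontr)
  assume ne: "fst z \<noteq> fst g"
  have g: "fst g \<in> verts T" "fst g \<noteq> root T \<longrightarrow> snd g < hgt T (par T (fst g))"
    using assms(2) ptsD unfolding anc_def by blast+
  have "vanc T (fst z) (fst g)" using assms(2) unfolding anc_def by blast
  from vanc_strict[OF assms(1) g(1) this ne] g(2) assms(3) show False by auto
qed

lemma anc_eq_height: "merge_tree T \<Longrightarrow> anc T x y \<Longrightarrow> snd x = snd y \<Longrightarrow> x = y"
  using anc_same_edge[of T x y] ptsD[of y T] anc_pts[of T x y] by (metis prod.collapse)

lemma anc_antisym: "merge_tree T \<Longrightarrow> anc T x y \<Longrightarrow> anc T y x \<Longrightarrow> x = y"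
  using anc_eq_height anc_pts(3) by (metis order_antisym)

lemma anc_cmp:
  assumes "merge_tree T" "anc T a y" "anc T b y" "snd a \<le> snd b"
  shows "anc T b a"
proof -
  have va: "vanc T (fst a) (fst y)" and vb: "vanc T (fst b) (fst y)" using assms unfolding anc_def by auto
  have pa: "a \<in> pts T" and pb: "b \<in> pts T" using assms anc_pts by blast+
  from vanc_cmp[OF va vb] show ?thesis
  proof
    assume "vanc T (fst a) (fst b)"
    show ?thesis
    proof (cases "fst a = fst b")
      case True then show ?thesis using pa pb assms(4) unfolding anc_def by (simp add: vanc_refl)
    next
      case False
      have "fst b \<in> verts T" using ptsD[OF pb] by blast
      from vanc_strict[OF assms(1) this \<open>vanc T (fst a) (fst b)\<close> False]
      have "fst b \<noteq> root T" "hgt T (par T (fst b)) \<le> hgt T (fst a)" by auto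
      with ptsD[OF pb] ptsD[OF pa] assms(4) show ?thesis by auto
    qed
  next
    assume "vanc T (fst b) (fst a)"
    then show ?thesis using pa pb assms(4) unfolding anc_def by auto
  qed
qed

lemma anc_unique: "merge_tree T \<Longrightarrow> anc T a y \<Longrightarrow> anc T b y \<Longrightarrow> snd a = snd b \<Longrightarrow> a = b"
proof -
  assume a: "merge_tree T" "anc T a y" "anc T b y" "snd a = snd b"
  then have "anc T b a" using anc_cmp[of T a y b] by simp
  then show "a = b" using anc_eq_height[OF a(1)] a(4) by metis
qed

lemma anc_exists:
  assumes "merge_tree T" "x \<in> pts T" "snd x \<le> t"
  shows "\<exists>z. anc T z x \<and> snd z = t"
proof -
  have "\<forall>v. v \<in> verts T \<longrightarrow> hgt T v \<le> t \<longrightarrow> card {y \<in> verts T. hgt T v < hgt T y} = k \<longrightarrow>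
          (\<exists>w. vanc T w v \<and> (w, t) \<in> pts T)" for k
  proof (induction k rule: less_induct)
    case (less k)
    show ?case
    proof (intro allI impI)
      fix v assume v: "v \<in> verts T" "hgt T v \<le> t" "card {y \<in> verts T. hgt T v < hgt T y} = k"
      show "\<exists>w. vanc T w v \<and> (w, t) \<in> pts T"
      proof (cases "v = root T \<or> t < hgt T (par T v)")
        case True then show ?thesis using v by (intro exI[of _ v]) (auto simp: vanc_refl pts_iff)
      next
        case False
        have p: "par T v \<in> verts T" using mt_par_in[OF assms(1) v(1)] .
        have h: "hgt T v < hgt T (par T v)" using mt_hgt_par[OF assms(1) v(1)] False by auto
        have s1: "{x \<in> verts T. hgt T (par T v) < hgt T x} \<subseteq> {x \<in> verts T. hgt T v < hgt T x}"
          using h by (auto intro: less_trans)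
        have s2: "par T v \<in> {x \<in> verts T. hgt T v < hgt T x}" "par T v \<notin> {x \<in> verts T. hgt T (par T v) < hgt T x}"
          using h p by auto
        have sub: "{x \<in> verts T. hgt T (par T v) < hgt T x} \<subset> {x \<in> verts T. hgt T v < hgt T x}"
          using s1 s2 by blast
        have fin: "finite {x \<in> verts T. hgt T v < hgt T x}" using mt_root(3)[OF assms(1)] by simp
        have lt: "card {x \<in> verts T. hgt T (par T v) < hgt T x} < k"
          using psubset_card_mono[OF fin sub] v(3) by simp
        have ht: "hgt T (par T v) \<le> t" using False by auto
        obtain w where w1: "vanc T w (par T v)" and w2: "(w, t) \<in> pts T"
          using less.IH[OF lt, rule_format, OF p ht refl] by blast
        have "vanc T w v" by (rule vanc_trans[OF w1 vanc_par])
        then show ?thesis using w2 by blast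
      qed
    qed
  qed
  note ex = this
  have fx: "fst x \<in> verts T" "hgt T (fst x) \<le> t" using assms(3) ptsD[OF assms(2)] by auto
  obtain w where w: "vanc T w (fst x)" "(w, t) \<in> pts T" using ex[rule_format, OF fx refl] by blast
  have "anc T (w, t) x" unfolding anc_def using w assms(2,3) by simp
  then show ?thesis by (intro exI[of _ "(w,t)"]) simp
qed

lemma shift_unique:
  assumes "merge_tree T" "anc T z x" "snd z = snd x + e"
  shows "shift T x e = z"
  unfolding shift_def
proof (rule the_equality)
  show "anc T z x \<and> snd z = snd x + e" using assms by simp
  fix w assume "anc T w x \<and> snd w = snd x + e"
  then show "w = z" using anc_unique[OF assms(1), of w x z] assms by simp
qed

lemma shift_props:
  assumes "merge_tree T" "x \<in> pts T" "0 \<le> e"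
  shows "anc T (shift T x e) x" "snd (shift T x e) = snd x + e" "shift T x e \<in> pts T"
proof -
  obtain z where z: "anc T z x" "snd z = snd x + e" using anc_exists[OF assms(1,2), of "snd x + e"] assms(3) by auto
  have "shift T x e = z" using shift_unique[OF assms(1) z] .
  then show "anc T (shift T x e) x" "snd (shift T x e) = snd x + e" "shift T x e \<in> pts T"
    using z anc_pts(1)[OF z(1)] by auto
qed

lemma shift_0: "merge_tree T \<Longrightarrow> x \<in> pts T \<Longrightarrow> shift T x 0 = x"
  using shift_unique[of T x x 0] anc_refl[of x T] by simp

lemma shift_add:
  assumes "merge_tree T" "x \<in> pts T" "0 \<le> a" "0 \<le> b"
  shows "shift T (shift T x a) b = shift T x (a + b)"
proof -
  note s1 = shift_props[OF assms(1,2,3)]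
  note s2 = shift_props[OF assms(1) s1(3) assms(4)]
  have h1: "anc T (shift T (shift T x a) b) x" using anc_trans[OF s2(1) s1(1)] .
  have h2: "snd (shift T (shift T x a) b) = snd x + (a + b)" using s1(2) s2(2) by simp
  show ?thesis using shift_unique[OF assms(1) h1 h2] by simp
qed

lemma shift_mono:
  assumes "merge_tree T" "x \<in> pts T" "0 \<le> a" "a \<le> b"
  shows "anc T (shift T x b) (shift T x a)"
proof -
  have b: "0 \<le> b" using assms by simp
  show ?thesis
    using anc_cmp[OF assms(1) shift_props(1)[OF assms(1,2,3)] shift_props(1)[OF assms(1,2) b]]
      shift_props(2)[OF assms(1,2,3)] shift_props(2)[OF assms(1,2) b] assms(4) by simp
qed

lemma shift_anc_mono:
  assumes "merge_tree T" "anc T a b" "0 \<le> d"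
  shows "anc T (shift T a d) (shift T b d)"
proof -
  have pa: "a \<in> pts T" and pb: "b \<in> pts T" using anc_pts[OF assms(2)] by blast+
  have "anc T (shift T a d) b" using anc_trans[OF shift_props(1)[OF assms(1) pa assms(3)] assms(2)] .
  then show ?thesis using anc_cmp[OF assms(1) shift_props(1)[OF assms(1) pb assms(3)]]
      shift_props(2)[OF assms(1) pa assms(3)] shift_props(2)[OF assms(1) pb assms(3)] anc_pts(3)[OF assms(2)] by simp
qed

lemma close_eq:
  assumes "merge_tree T" "p \<in> pts T" "q \<in> pts T" "snd p = snd q"
    and close: "\<And>\<delta>. \<delta> > 0 \<Longrightarrow> \<exists>z. anc T z p \<and> anc T z q \<and> snd z < snd p + \<delta>"
  shows "p = q"
proof -
  define gp where "gp = (if fst p = root T then 1 else hgt T (par T (fst p)) - snd p)"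
  define gq where "gq = (if fst q = root T then 1 else hgt T (par T (fst q)) - snd q)"
  have "gp > 0" "gq > 0" using ptsD[OF assms(2)] ptsD[OF assms(3)] unfolding gp_def gq_def by auto
  then have "min gp gq > 0" by simp
  then obtain z where z: "anc T z p" "anc T z q" "snd z < snd p + min gp gq"
    using close by blast
  have "fst p = root T \<or> snd z < hgt T (par T (fst p))" using z(3) unfolding gp_def by (auto split: if_splits)
  then have "fst z = fst p" using anc_same_edge[OF assms(1) z(1)] by simp
  moreover have "fst q = root T \<or> snd z < hgt T (par T (fst q))" using z(3) assms(4) unfolding gq_def by (auto split: if_splits)
  then have "fst z = fst q" using anc_same_edge[OF assms(1) z(2)] by simp
  ultimately show ?thesis using assms(4) by (simp add: prod_eq_iff)
qed

lemma close_anc: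
  assumes "merge_tree T" "a \<in> pts T" "b \<in> pts T" "snd b \<le> snd a"
    and close: "\<And>\<delta>. \<delta> > 0 \<Longrightarrow> \<exists>d. 0 \<le> d \<and> d < \<delta> \<and> anc T (shift T a d) (shift T b d)"
  shows "anc T a b"
proof -
  define b' where "b' = shift T b (snd a - snd b)"
  have h0: "0 \<le> snd a - snd b" using assms(4) by simp
  note sb = shift_props[OF assms(1,3) h0]
  have b': "anc T b' b" "snd b' = snd a" "b' \<in> pts T" using sb unfolding b'_def by auto
  have "a = b'"
  proof (rule close_eq[OF assms(1,2) b'(3)])
    show "snd a = snd b'" using b' by simp
    fix \<delta> :: real assume "\<delta> > 0"
    then obtain d where d: "0 \<le> d" "d < \<delta>" "anc T (shift T a d) (shift T b d)" using close by blast
    have z1: "anc T (shift T a d) b" using anc_trans[OF d(3) shift_props(1)[OF assms(1,3) d(1)]] .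
    have z2: "anc T (shift T b' d) b" using anc_trans[OF shift_props(1)[OF assms(1) b'(3) d(1)] b'(1)] .
    have "shift T b' d = shift T a d" using anc_unique[OF assms(1) z2 z1]
      shift_props(2)[OF assms(1) b'(3) d(1)] shift_props(2)[OF assms(1) assms(2) d(1)] b'(2) by simp
    moreover have "anc T (shift T a d) a" "snd (shift T a d) < snd a + \<delta>"
      using shift_props[OF assms(1) assms(2) d(1)] d(2) by auto
    moreover have "anc T (shift T b' d) b'" using shift_props[OF assms(1) b'(3) d(1)] by simp
    ultimately show "\<exists>z. anc T z a \<and> anc T z b' \<and> snd z < snd a + \<delta>" by metis
  qed
  then show ?thesis using b' by simp
qed

section \<open>Lowest common ancestor height and tree distance\<close>

lemma common_anc_ex:
  assumes "merge_tree T" "x \<in> pts T" "y \<in> pts T"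
  shows "\<exists>z. anc T z x \<and> anc T z y"
proof -
  define t where "t = max (max (snd x) (snd y)) (hgt T (root T))"
  have rp: "(root T, t) \<in> pts T" using mt_root(1)[OF assms(1)] unfolding t_def by (simp add: pts_iff)
  have vx: "vanc T (root T) (fst x)" using vanc_root[OF assms(1)] ptsD[OF assms(2)] by blast
  have vy: "vanc T (root T) (fst y)" using vanc_root[OF assms(1)] ptsD[OF assms(3)] by blast
  have "anc T (root T, t) x" "anc T (root T, t) y" unfolding anc_def using rp vx vy assms(2,3)
    unfolding t_def by auto
  then show ?thesis by blast
qed

definition CA :: "'v mtree \<Rightarrow> 'v \<times> real \<Rightarrow> 'v \<times> real \<Rightarrow> real set" where
  "CA T x y = {snd z | z. anc T z x \<and> anc T z y}"

lemma lca_CA: "lca_height T x y = Inf (CA T x y)"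
  unfolding lca_height_def CA_def by simp

lemma CA_ne: "merge_tree T \<Longrightarrow> x \<in> pts T \<Longrightarrow> y \<in> pts T \<Longrightarrow> CA T x y \<noteq> {}"
  using common_anc_ex[of T x y] unfolding CA_def by blast

lemma CA_bdd: "bdd_below (CA T x y)"
  unfolding CA_def bdd_below_def using anc_pts(3) by blast

lemma lca_lower: "anc T z x \<Longrightarrow> anc T z y \<Longrightarrow> lca_height T x y \<le> snd z"
proof -
  assume "anc T z x" "anc T z y"
  then have "snd z \<in> CA T x y" unfolding CA_def by blast
  then show ?thesis unfolding lca_CA by (rule cInf_lower[OF _ CA_bdd])
qed

lemma lca_ge:
  assumes "merge_tree T" "x \<in> pts T" "y \<in> pts T"
  shows "snd x \<le> lca_height T x y" "snd y \<le> lca_height T x y"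
proof -
  have "\<forall>t\<in>CA T x y. snd x \<le> t \<and> snd y \<le> t" unfolding CA_def using anc_pts(3) by blast
  then show "snd x \<le> lca_height T x y" "snd y \<le> lca_height T x y" unfolding lca_CA
    using cInf_greatest[OF CA_ne[OF assms]] by auto
qed

lemma lca_close:
  assumes "merge_tree T" "x \<in> pts T" "y \<in> pts T" "lca_height T x y < t"
  shows "\<exists>z. anc T z x \<and> anc T z y \<and> snd z < t"
proof -
  have "Inf (CA T x y) < t" using assms(4) unfolding lca_CA .
  then obtain s where "s \<in> CA T x y" "s < t" using cInf_lessD[OF CA_ne[OF assms(1,2,3)]] by blast
  then show ?thesis unfolding CA_def by blast
qed

lemma CA_sym: "CA T x y = CA T y x"
  unfolding CA_def by blast

lemma tdist_sym: "tdist T x y = tdist T y x"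
  unfolding tdist_def lca_CA using CA_sym by (metis add.commute)

lemma lca_anc:
  assumes "merge_tree T" "anc T x y"
  shows "lca_height T x y = snd x"
proof -
  have px: "x \<in> pts T" and py: "y \<in> pts T" using anc_pts[OF assms(2)] by blast+
  have "lca_height T x y \<le> snd x" using lca_lower[OF anc_refl[OF px] assms(2)] .
  moreover have "snd x \<le> lca_height T x y" using lca_ge[OF assms(1) px py] by simp
  ultimately show ?thesis by simp
qed

lemma tdist_anc:
  assumes "merge_tree T" "anc T x y"
  shows "tdist T x y = snd x - snd y" "tdist T y x = snd x - snd y"
  using lca_anc[OF assms] tdist_sym[of T y x] unfolding tdist_def by simp_all

section \<open>Continuity versus monotonicity\<close>

definition hs :: "'a mtree \<Rightarrow> 'b mtree \<Rightarrow> real \<Rightarrow> ('a \<times> real \<Rightarrow> 'b \<times> real) \<Rightarrow> bool" where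
  "hs T1 T2 c f \<longleftrightarrow> (\<forall>x\<in>pts T1. f x \<in> pts T2 \<and> snd (f x) = snd x + c)"

definition ancmono :: "'a mtree \<Rightarrow> 'b mtree \<Rightarrow> ('a \<times> real \<Rightarrow> 'b \<times> real) \<Rightarrow> bool" where
  "ancmono T1 T2 f \<longleftrightarrow> (\<forall>x y. anc T1 x y \<longrightarrow> anc T2 (f x) (f y))"

lemma mono_cont:
  assumes m1: "merge_tree T1" and m2: "merge_tree T2" and h: "hs T1 T2 c f" and mo: "ancmono T1 T2 f"
  shows "cont_map T1 T2 f"
proof -
  have lip: "tdist T2 (f y) (f x) \<le> tdist T1 y x" if x: "x \<in> pts T1" and y: "y \<in> pts T1" for x y
  proof -
    have fx: "f x \<in> pts T2" "snd (f x) = snd x + c" and fy: "f y \<in> pts T2" "snd (f y) = snd y + c"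
      using h x y unfolding hs_def by auto
    have "\<forall>t \<in> CA T1 y x. lca_height T2 (f y) (f x) - c \<le> t"
    proof
      fix t assume "t \<in> CA T1 y x"
      then obtain z where z: "t = snd z" "anc T1 z y" "anc T1 z x" unfolding CA_def by blast
      have "anc T2 (f z) (f y)" "anc T2 (f z) (f x)" using mo z(2,3) unfolding ancmono_def by blast+
      then have "lca_height T2 (f y) (f x) \<le> snd (f z)" by (rule lca_lower)
      moreover have "snd (f z) = snd z + c" using h anc_pts(1)[OF z(2)] unfolding hs_def by auto
      ultimately show "lca_height T2 (f y) (f x) - c \<le> t" using z(1) by simp
    qed
    then have "lca_height T2 (f y) (f x) - c \<le> Inf (CA T1 y x)"
      using cInf_greatest[OF CA_ne[OF m1 y x]] by blast
    then show ?thesis unfolding tdist_def lca_CA[of T1] using fx fy by simp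
  qed
  show ?thesis unfolding cont_map_def
  proof (intro conjI ballI allI impI)
    fix x assume "x \<in> pts T1" then show "f x \<in> pts T2" using h unfolding hs_def by auto
  next
    fix x and e :: real assume x: "x \<in> pts T1" and e: "0 < e"
    show "\<exists>d>0. \<forall>y\<in>pts T1. tdist T1 y x < d \<longrightarrow> tdist T2 (f y) (f x) < e"
      using e lip[OF x] by (intro exI[of _ e]) force
  qed
qed

lemma cont_mono:
  assumes m1: "merge_tree T1" and m2: "merge_tree T2" and h: "hs T1 T2 c f" and ct: "cont_map T1 T2 f"
    and xy: "anc T1 x y"
  shows "anc T2 (f x) (f y)"
proof -
  have px: "x \<in> pts T1" and py: "y \<in> pts T1" using anc_pts[OF xy] by blast+
  define a where "a = snd y"
  define b where "b = snd x"
  have ab: "a \<le> b" using anc_pts(3)[OF xy] unfolding a_def b_def by simp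
  define p where "p t = shift T1 y (t - a)" for t
  have pp: "anc T1 (p t) y" "snd (p t) = t" "p t \<in> pts T1" if "a \<le> t" for t
    using shift_props[OF m1 py, of "t - a"] that unfolding p_def a_def by auto
  have pb: "p b = x" unfolding p_def using shift_unique[OF m1 xy] unfolding a_def b_def by simp
  have pa: "p a = y" unfolding p_def using shift_0[OF m1 py] by simp
  have ptd: "tdist T1 (p t) (p s) = \<bar>t - s\<bar>" if "a \<le> t" "a \<le> s" for t s
  proof (cases "s \<le> t")
    case True
    have "anc T1 (p t) (p s)" unfolding p_def using shift_mono[OF m1 py, of "s - a" "t - a"] that True by simp
    then show ?thesis using tdist_anc(1)[OF m1] pp that True by simp
  next
    case False
    have "anc T1 (p s) (p t)" unfolding p_def using shift_mono[OF m1 py, of "t - a" "s - a"] that False by simp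
    then show ?thesis using tdist_anc(2)[OF m1] pp that False by simp
  qed
  have fpts: "f q \<in> pts T2" "snd (f q) = snd q + c" if "q \<in> pts T1" for q
    using h that unfolding hs_def by auto
  define S where "S = {t. a \<le> t \<and> t \<le> b \<and> anc T2 (f (p t)) (f y)}"
  have aS: "a \<in> S" unfolding S_def using ab pa anc_refl[OF fpts(1)[OF py]] by simp
  have Sne: "S \<noteq> {}" using aS by blast
  have Sbdd: "bdd_above S" unfolding S_def bdd_above_def by blast
  define m where "m = Sup S"
  have am: "a \<le> m" unfolding m_def using cSup_upper[OF aS Sbdd] .
  have mb: "m \<le> b" unfolding m_def by (rule cSup_least[OF Sne]) (simp add: S_def)
  define F where "F = f (p m)"
  have pm: "p m \<in> pts T1" using pp(3)[OF am] .
  have F: "F \<in> pts T2" "snd F = m + c" unfolding F_def using fpts[OF pm] pp(2)[OF am] by auto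
  define \<eta> where "\<eta> = (if fst F = root T2 then 1 else hgt T2 (par T2 (fst F)) - snd F)"
  have \<eta>: "\<eta> > 0" unfolding \<eta>_def using ptsD[OF F(1)] by auto
  obtain \<delta> where \<delta>: "\<delta> > 0" "\<forall>q\<in>pts T1. tdist T1 q (p m) < \<delta> \<longrightarrow> tdist T2 (f q) (f (p m)) < \<eta>"
    using ct pm \<eta> unfolding cont_map_def by meson
  have near: "\<exists>z. anc T2 z (f (p t)) \<and> anc T2 z F \<and> fst z = fst F"
    if t: "a \<le> t" "\<bar>t - m\<bar> < \<delta>" for t
  proof -
    have "tdist T1 (p t) (p m) < \<delta>" using ptd[OF t(1) am] t(2) by simp
    then have d: "tdist T2 (f (p t)) F < \<eta>" using \<delta>(2) pp(3)[OF t(1)] unfolding F_def by blast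
    have G: "f (p t) \<in> pts T2" using fpts(1)[OF pp(3)[OF t(1)]] .
    have "snd (f (p t)) \<le> lca_height T2 (f (p t)) F" using lca_ge[OF m2 G F(1)] by simp
    then have "lca_height T2 (f (p t)) F < snd F + \<eta>" using d unfolding tdist_def by simp
    then obtain z where z: "anc T2 z (f (p t))" "anc T2 z F" "snd z < snd F + \<eta>"
      using lca_close[OF m2 G F(1)] by blast
    have "fst F = root T2 \<or> snd z < hgt T2 (par T2 (fst F))" using z(3) unfolding \<eta>_def by (auto split: if_splits)
    then have "fst z = fst F" using anc_same_edge[OF m2 z(2)] by simp
    then show ?thesis using z by blast
  qed
  have mS: "m \<in> S"
  proof -
    have "m - \<delta> < Sup S" using \<delta>(1) unfolding m_def by simp
    then obtain t where tS: "t \<in> S" "m - \<delta> < t" using less_cSup_iff[OF Sne Sbdd] by blast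
    have tm: "t \<le> m" unfolding m_def using cSup_upper[OF tS(1) Sbdd] .
    have at: "a \<le> t" using tS(1) unfolding S_def by simp
    obtain z where z: "anc T2 z (f (p t))" "anc T2 z F" "fst z = fst F" using near[OF at] tS(2) tm by auto
    have "anc T2 (f (p t)) (f y)" using tS(1) unfolding S_def by simp
    then have zy: "anc T2 z (f y)" using anc_trans[OF z(1)] by blast
    have "anc T2 F (f y)" unfolding anc_def
      using F zy z(3) fpts[OF py] am unfolding anc_def a_def by auto
    then show ?thesis unfolding S_def F_def using am mb by simp
  qed
  have "m = b"
  proof (rule ccontr)
    assume "m \<noteq> b"
    then have mb': "m < b" using mb by simp
    define t where "t = min b (m + \<delta> / 2)"
    have t: "m < t" "t \<le> b" "a \<le> t" "\<bar>t - m\<bar> < \<delta>" using mb' \<delta>(1) am unfolding t_def by auto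
    obtain z where z: "anc T2 z (f (p t))" "anc T2 z F" "fst z = fst F" using near[OF t(3,4)] by blast
    have G: "f (p t) \<in> pts T2" "snd (f (p t)) = t + c" using fpts[OF pp(3)[OF t(3)]] pp(2)[OF t(3)] by auto
    have "hgt T2 (fst z) \<le> snd (f (p t))" using ptsD[OF F(1)] z(3) F(2) G(2) t(1) by simp
    then have "fst z = fst (f (p t))" using anc_same_edge2[OF m2 z(1)] by simp
    then have "anc T2 (f (p t)) F" unfolding anc_def using G F z(3) t(1) by (simp add: vanc_refl)
    moreover have "anc T2 F (f y)" using mS unfolding S_def F_def by simp
    ultimately have "anc T2 (f (p t)) (f y)" by (rule anc_trans)
    then have "t \<in> S" unfolding S_def using t by simp
    then have "t \<le> m" unfolding m_def using cSup_upper[OF _ Sbdd] by simp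
    then show False using t(1) by simp
  qed
  then show ?thesis using mS pb unfolding S_def by simp
qed

lemma cont_iff_mono:
  assumes "merge_tree T1" "merge_tree T2" "hs T1 T2 c f"
  shows "cont_map T1 T2 f \<longleftrightarrow> ancmono T1 T2 f"
  using mono_cont[OF assms] cont_mono[OF assms] unfolding ancmono_def by blast

section \<open>Compatible maps\<close>

lemma compatible_iff:
  assumes m1: "merge_tree T1" and m2: "merge_tree T2"
  shows "compatible T1 T2 e \<alpha> \<beta> \<longleftrightarrow> hs T1 T2 e \<alpha> \<and> hs T2 T1 e \<beta> \<and> ancmono T1 T2 \<alpha> \<and> ancmono T2 T1 \<beta> \<and>
     (\<forall>u \<in> pts T1. \<beta> (\<alpha> u) = shift T1 u (2 * e)) \<and> (\<forall>w \<in> pts T2. \<alpha> (\<beta> w) = shift T2 w (2 * e))"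
proof
  assume c: "compatible T1 T2 e \<alpha> \<beta>"
  have h1: "hs T1 T2 e \<alpha>" using c unfolding compatible_def cont_map_def hs_def by auto
  have h2: "hs T2 T1 e \<beta>" using c unfolding compatible_def cont_map_def hs_def by auto
  have "ancmono T1 T2 \<alpha>" using cont_iff_mono[OF m1 m2 h1] c unfolding compatible_def by blast
  moreover have "ancmono T2 T1 \<beta>" using cont_iff_mono[OF m2 m1 h2] c unfolding compatible_def by blast
  ultimately show "hs T1 T2 e \<alpha> \<and> hs T2 T1 e \<beta> \<and> ancmono T1 T2 \<alpha> \<and> ancmono T2 T1 \<beta> \<and>
     (\<forall>u \<in> pts T1. \<beta> (\<alpha> u) = shift T1 u (2 * e)) \<and> (\<forall>w \<in> pts T2. \<alpha> (\<beta> w) = shift T2 w (2 * e))"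
    using h1 h2 c unfolding compatible_def by blast
next
  assume a: "hs T1 T2 e \<alpha> \<and> hs T2 T1 e \<beta> \<and> ancmono T1 T2 \<alpha> \<and> ancmono T2 T1 \<beta> \<and>
     (\<forall>u \<in> pts T1. \<beta> (\<alpha> u) = shift T1 u (2 * e)) \<and> (\<forall>w \<in> pts T2. \<alpha> (\<beta> w) = shift T2 w (2 * e))"
  have "cont_map T1 T2 \<alpha>" using mono_cont[OF m1 m2] a by blast
  moreover have "cont_map T2 T1 \<beta>" using mono_cont[OF m2 m1] a by blast
  ultimately show "compatible T1 T2 e \<alpha> \<beta>" using a unfolding compatible_def hs_def by blast
qed

lemma commute_shift:
  assumes m1: "merge_tree T1" and m2: "merge_tree T2" and h: "hs T1 T2 c f" and mo: "ancmono T1 T2 f"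
    and x: "x \<in> pts T1" and d: "0 \<le> d"
  shows "f (shift T1 x d) = shift T2 (f x) d"
proof -
  note s = shift_props[OF m1 x d]
  have a: "anc T2 (f (shift T1 x d)) (f x)" using mo s(1) unfolding ancmono_def by blast
  have "snd (f (shift T1 x d)) = snd (f x) + d" using h s x unfolding hs_def by simp
  then show ?thesis using shift_unique[OF m2 a] by simp
qed

lemma compat_up:
  assumes m1: "merge_tree T1" and m2: "merge_tree T2" and c: "compatible T1 T2 e \<alpha> \<beta>"
    and e: "0 \<le> e" "e \<le> e'"
  shows "\<exists>\<alpha>' \<beta>'. compatible T1 T2 e' \<alpha>' \<beta>'"
proof -
  define d where "d = e' - e"
  have d: "0 \<le> d" using e unfolding d_def by simp
  note cc = c[unfolded compatible_iff[OF m1 m2]]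
  have h1: "hs T1 T2 e \<alpha>" and h2: "hs T2 T1 e \<beta>" and mo1: "ancmono T1 T2 \<alpha>" and mo2: "ancmono T2 T1 \<beta>"
    and e1: "\<forall>u \<in> pts T1. \<beta> (\<alpha> u) = shift T1 u (2 * e)" and e2: "\<forall>w \<in> pts T2. \<alpha> (\<beta> w) = shift T2 w (2 * e)"
    using cc by blast+
  define \<alpha>' where "\<alpha>' u = shift T2 (\<alpha> u) d" for u
  define \<beta>' where "\<beta>' w = shift T1 (\<beta> w) d" for w
  have h1': "hs T1 T2 e' \<alpha>'" unfolding hs_def \<alpha>'_def
  proof
    fix x assume "x \<in> pts T1"
    then have "\<alpha> x \<in> pts T2" "snd (\<alpha> x) = snd x + e" using h1 unfolding hs_def by auto
    then show "shift T2 (\<alpha> x) d \<in> pts T2 \<and> snd (shift T2 (\<alpha> x) d) = snd x + e'"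
      using shift_props[OF m2 _ d] unfolding d_def by simp
  qed
  have h2': "hs T2 T1 e' \<beta>'" unfolding hs_def \<beta>'_def
  proof
    fix x assume "x \<in> pts T2"
    then have "\<beta> x \<in> pts T1" "snd (\<beta> x) = snd x + e" using h2 unfolding hs_def by auto
    then show "shift T1 (\<beta> x) d \<in> pts T1 \<and> snd (shift T1 (\<beta> x) d) = snd x + e'"
      using shift_props[OF m1 _ d] unfolding d_def by simp
  qed
  have mo1': "ancmono T1 T2 \<alpha>'" unfolding ancmono_def \<alpha>'_def
    using mo1 shift_anc_mono[OF m2 _ d] unfolding ancmono_def by blast
  have mo2': "ancmono T2 T1 \<beta>'" unfolding ancmono_def \<beta>'_def
    using mo2 shift_anc_mono[OF m1 _ d] unfolding ancmono_def by blast
  have e1': "\<forall>u \<in> pts T1. \<beta>' (\<alpha>' u) = shift T1 u (2 * e')"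
  proof
    fix u assume u: "u \<in> pts T1"
    have au: "\<alpha> u \<in> pts T2" using h1 u unfolding hs_def by auto
    have "\<beta>' (\<alpha>' u) = shift T1 (\<beta> (shift T2 (\<alpha> u) d)) d" unfolding \<alpha>'_def \<beta>'_def ..
    also have "\<beta> (shift T2 (\<alpha> u) d) = shift T1 (\<beta> (\<alpha> u)) d" using commute_shift[OF m2 m1 h2 mo2 au d] .
    also have "\<beta> (\<alpha> u) = shift T1 u (2 * e)" using e1 u by blast
    also have "shift T1 (shift T1 (shift T1 u (2 * e)) d) d = shift T1 u (2 * e + d + d)"
      using shift_add[OF m1 u, of "2 * e" d] shift_add[OF m1 shift_props(3)[OF m1 u], of "2 * e" d d]
        shift_add[OF m1 u, of "2 * e + d" d] e d by simp
    also have "2 * e + d + d = 2 * e'" unfolding d_def by simp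
    finally show "\<beta>' (\<alpha>' u) = shift T1 u (2 * e')" .
  qed
  have e2': "\<forall>w \<in> pts T2. \<alpha>' (\<beta>' w) = shift T2 w (2 * e')"
  proof
    fix u assume u: "u \<in> pts T2"
    have au: "\<beta> u \<in> pts T1" using h2 u unfolding hs_def by auto
    have "\<alpha>' (\<beta>' u) = shift T2 (\<alpha> (shift T1 (\<beta> u) d)) d" unfolding \<alpha>'_def \<beta>'_def ..
    also have "\<alpha> (shift T1 (\<beta> u) d) = shift T2 (\<alpha> (\<beta> u)) d" using commute_shift[OF m1 m2 h1 mo1 au d] .
    also have "\<alpha> (\<beta> u) = shift T2 u (2 * e)" using e2 u by blast
    also have "shift T2 (shift T2 (shift T2 u (2 * e)) d) d = shift T2 u (2 * e + d + d)"
      using shift_add[OF m2 u, of "2 * e" d] shift_add[OF m2 u, of "2 * e + d" d] e d by simp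
    also have "2 * e + d + d = 2 * e'" unfolding d_def by simp
    finally show "\<alpha>' (\<beta>' u) = shift T2 u (2 * e')" .
  qed
  have "compatible T1 T2 e' \<alpha>' \<beta>'" unfolding compatible_iff[OF m1 m2]
    using h1' h2' mo1' mo2' e1' e2' by blast
  then show ?thesis by blast
qed

lemma compat_good:
  assumes m1: "merge_tree T1" and m2: "merge_tree T2" and e0: "0 \<le> \<epsilon>"
    and c: "compatible T1 T2 \<epsilon> \<alpha> \<beta>"
  shows "good_map T1 T2 \<epsilon> \<alpha>"
proof -
  note cc = c[unfolded compatible_iff[OF m1 m2]]
  have h1: "hs T1 T2 \<epsilon> \<alpha>" and h2: "hs T2 T1 \<epsilon> \<beta>" and mo1: "ancmono T1 T2 \<alpha>" and mo2: "ancmono T2 T1 \<beta>"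
    and e1: "\<forall>u \<in> pts T1. \<beta> (\<alpha> u) = shift T1 u (2 * \<epsilon>)" and e2: "\<forall>w \<in> pts T2. \<alpha> (\<beta> w) = shift T2 w (2 * \<epsilon>)"
    using cc by blast+
  define I where "I = \<alpha> ` pts T1"
  have P2: "\<forall>u1 \<in> pts T1. \<forall>u2 \<in> pts T1. anc T2 (\<alpha> u1) (\<alpha> u2) \<longrightarrow>
        anc T1 (shift T1 u1 (2 * \<epsilon>)) (shift T1 u2 (2 * \<epsilon>))"
  proof (intro ballI impI)
    fix u1 u2 assume u: "u1 \<in> pts T1" "u2 \<in> pts T1" and a: "anc T2 (\<alpha> u1) (\<alpha> u2)"
    have "anc T1 (\<beta> (\<alpha> u1)) (\<beta> (\<alpha> u2))" using mo2 a unfolding ancmono_def by blast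
    then show "anc T1 (shift T1 u1 (2 * \<epsilon>)) (shift T1 u2 (2 * \<epsilon>))" using e1 u by simp
  qed
  have P3: "\<exists>wF. lowest_anc_in T2 I w wF \<and> \<bar>snd wF - snd w\<bar> \<le> 2 * \<epsilon>" if w: "w \<in> pts T2" for w
  proof -
    define A where "A = {t. snd w \<le> t \<and> shift T2 w (t - snd w) \<in> I}"
    have bw: "\<beta> w \<in> pts T1" using h2 w unfolding hs_def by auto
    have A2: "snd w + 2 * \<epsilon> \<in> A" unfolding A_def I_def using e0 e2 w bw by force
    have Ane: "A \<noteq> {}" using A2 by blast
    have Abdd: "bdd_below A" unfolding A_def bdd_below_def by blast
    define ts where "ts = Inf A"
    have ts1: "snd w \<le> ts" unfolding ts_def by (rule cInf_greatest[OF Ane]) (simp add: A_def)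
    have ts2: "ts \<le> snd w + 2 * \<epsilon>" unfolding ts_def by (rule cInf_lower[OF A2 Abdd])
    have tsl: "ts \<le> t" if "t \<in> A" for t unfolding ts_def by (rule cInf_lower[OF that Abdd])
    have Apre: "\<exists>v\<in>verts T1. (v, t - \<epsilon>) \<in> pts T1 \<and> \<alpha> (v, t - \<epsilon>) = shift T2 w (t - snd w)" if t: "t \<in> A" for t
    proof -
      obtain u where u: "u \<in> pts T1" "shift T2 w (t - snd w) = \<alpha> u" using t unfolding A_def I_def by blast
      have "snd (\<alpha> u) = t" using u(2)[symmetric] shift_props(2)[OF m2 w, of "t - snd w"] t unfolding A_def by simp
      then have "snd u = t - \<epsilon>" using h1 u(1) unfolding hs_def by simp
      then have "u = (fst u, t - \<epsilon>)" by (simp add: prod_eq_iff)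
      then show ?thesis using u ptsD[OF u(1)] by metis
    qed
    define G where "G v t \<longleftrightarrow> t \<in> A \<and> (v, t - \<epsilon>) \<in> pts T1 \<and> \<alpha> (v, t - \<epsilon>) = shift T2 w (t - snd w)" for v t
    have key: "\<exists>v\<in>verts T1. \<forall>\<delta>>0. \<exists>t. G v t \<and> t < ts + \<delta>"
    proof (rule ccontr)
      assume nk: "\<not> ?thesis"
      have "\<exists>\<delta>. \<delta> > 0 \<and> (\<forall>t. G v t \<longrightarrow> ts + \<delta> \<le> t)" if v: "v \<in> verts T1" for v
      proof -
        have "\<not> (\<forall>\<delta>>0. \<exists>t. G v t \<and> t < ts + \<delta>)" using nk v by blast
        then obtain \<delta> where "\<delta> > 0" "\<forall>t. G v t \<longrightarrow> \<not> t < ts + \<delta>" by blast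
        then show ?thesis by (intro exI[of _ \<delta>]) (simp add: not_less)
      qed
      then have "\<forall>v\<in>verts T1. \<exists>\<delta>. \<delta> > 0 \<and> (\<forall>t. G v t \<longrightarrow> ts + \<delta> \<le> t)" by blast
      from bchoice[OF this] obtain df where df: "\<forall>v\<in>verts T1. df v > 0 \<and> (\<forall>t. G v t \<longrightarrow> ts + df v \<le> t)"
        by blast
      define d0 where "d0 = Min (df ` verts T1)"
      have fin: "finite (df ` verts T1)" using mt_root(3)[OF m1] by (rule finite_imageI)
      have ne: "df ` verts T1 \<noteq> {}" using mt_root(1)[OF m1] by blast
      have "\<forall>a\<in>df ` verts T1. 0 < a" using df by simp
      then have d0: "d0 > 0" unfolding d0_def using Min_gr_iff[OF fin ne] by simp
      have "Inf A < ts + d0" using d0 unfolding ts_def by simp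
      then obtain t where t: "t \<in> A" "t < ts + d0" using cInf_lessD[OF Ane] by blast
      obtain v where v: "v \<in> verts T1" "(v, t - \<epsilon>) \<in> pts T1" "\<alpha> (v, t - \<epsilon>) = shift T2 w (t - snd w)"
        using Apre[OF t(1)] by blast
      have Gv: "G v t" unfolding G_def using t v by simp
      have "d0 \<le> df v" unfolding d0_def using Min_le[OF fin] v(1) by simp
      moreover have "ts + df v \<le> t" using df v(1) Gv by simp
      ultimately show False using t(2) by simp
    qed
    then obtain v where v: "v \<in> verts T1"
      and vt: "\<And>\<delta>. \<delta> > 0 \<Longrightarrow> \<exists>t\<in>A. t < ts + \<delta> \<and> (v, t - \<epsilon>) \<in> pts T1 \<and> \<alpha> (v, t - \<epsilon>) = shift T2 w (t - snd w)"
      unfolding G_def by blast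
    have hv: "hgt T1 v \<le> ts - \<epsilon>"
    proof (rule field_le_epsilon)
      fix \<delta> :: real assume "\<delta> > 0"
      then obtain t where "t \<in> A" "t < ts + \<delta>" "(v, t - \<epsilon>) \<in> pts T1" using vt by blast
      then show "hgt T1 v \<le> ts - \<epsilon> + \<delta>" by (simp add: pts_iff)
    qed
    have hp: "v \<noteq> root T1 \<longrightarrow> ts - \<epsilon> < hgt T1 (par T1 v)"
    proof -
      obtain t where "t \<in> A" "(v, t - \<epsilon>) \<in> pts T1" using vt[of 1] by auto
      then show ?thesis using tsl[of t] by (auto simp: pts_iff)
    qed
    define us where "us = (v, ts - \<epsilon>)"
    have us: "us \<in> pts T1" unfolding us_def using v hv hp by (simp add: pts_iff)
    define p where "p = shift T2 w (ts - snd w)"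
    have p: "anc T2 p w" "snd p = ts" "p \<in> pts T2"
      using shift_props[OF m2 w, of "ts - snd w"] ts1 unfolding p_def by auto
    have q: "\<alpha> us \<in> pts T2" "snd (\<alpha> us) = ts" using h1 us unfolding hs_def us_def by auto
    have "p = \<alpha> us"
    proof (rule close_eq[OF m2 p(3) q(1)])
      show "snd p = snd (\<alpha> us)" using p q by simp
      fix \<delta> :: real assume "\<delta> > 0"
      then obtain t where t: "t \<in> A" "t < ts + \<delta>" "(v, t - \<epsilon>) \<in> pts T1"
        "\<alpha> (v, t - \<epsilon>) = shift T2 w (t - snd w)" using vt by blast
      have tt: "ts \<le> t" using tsl[OF t(1)] .
      have "anc T1 (v, t - \<epsilon>) us" unfolding anc_def us_def using t(3) us tt unfolding us_def by (simp add: vanc_refl)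
      then have z1: "anc T2 (shift T2 w (t - snd w)) (\<alpha> us)" using mo1 t(4) unfolding ancmono_def by metis
      have z2: "anc T2 (shift T2 w (t - snd w)) p" unfolding p_def
        using shift_mono[OF m2 w, of "ts - snd w" "t - snd w"] ts1 tt by simp
      have "snd (shift T2 w (t - snd w)) = t" using shift_props(2)[OF m2 w, of "t - snd w"] ts1 tt by simp
      then show "\<exists>z. anc T2 z p \<and> anc T2 z (\<alpha> us) \<and> snd z < snd p + \<delta>" using z1 z2 t(2) p(2) by metis
    qed
    then have pI: "p \<in> I" unfolding I_def using us by blast
    have low: "lowest_anc_in T2 I w p" unfolding lowest_anc_in_def
    proof (intro conjI ballI impI)
      show "p \<in> I" using pI .
      show "anc T2 p w" using p(1) .
      fix z assume zI: "z \<in> I" and zw: "anc T2 z w"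
      have sz: "snd w \<le> snd z" using anc_pts(3)[OF zw] .
      have "shift T2 w (snd z - snd w) = z" using shift_unique[OF m2 zw] by simp
      then have "snd z \<in> A" unfolding A_def using zI sz by simp
      then have "ts \<le> snd z" using tsl by blast
      then show "anc T2 z p" using anc_cmp[OF m2 p(1) zw] p(2) by simp
    qed
    show ?thesis using low p(2) ts1 ts2 by (intro exI[of _ p]) simp
  qed
  show ?thesis unfolding good_map_def
  proof (intro conjI)
    show "cont_map T1 T2 \<alpha>" using c unfolding compatible_def by blast
    show "\<forall>u\<in>pts T1. snd (\<alpha> u) = snd u + \<epsilon>" using h1 unfolding hs_def by blast
    show "\<forall>u1 \<in> pts T1. \<forall>u2 \<in> pts T1. anc T2 (\<alpha> u1) (\<alpha> u2) \<longrightarrow>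
        anc T1 (shift T1 u1 (2 * \<epsilon>)) (shift T1 u2 (2 * \<epsilon>))" using P2 .
    show "\<forall>w \<in> pts T2 - \<alpha> ` pts T1. \<exists>wF. lowest_anc_in T2 (\<alpha> ` pts T1) w wF \<and> \<bar>snd wF - snd w\<bar> \<le> 2 * \<epsilon>"
      using P3 unfolding I_def by blast
  qed
qed

lemma low_unique:
  assumes "merge_tree T" "lowest_anc_in T I w z" "lowest_anc_in T I w z'"
  shows "z = z'"
  using assms(2,3) anc_antisym[OF assms(1)] unfolding lowest_anc_in_def by blast

lemma good_compat:
  assumes m1: "merge_tree T1" and m2: "merge_tree T2" and e0: "0 \<le> \<epsilon>"
    and g: "good_map T1 T2 \<epsilon> \<alpha>"
  shows "\<exists>\<beta>. compatible T1 T2 \<epsilon> \<alpha> \<beta>"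
proof -
  have ct: "cont_map T1 T2 \<alpha>" using g unfolding good_map_def by blast
  have h1: "hs T1 T2 \<epsilon> \<alpha>" using g unfolding good_map_def cont_map_def hs_def by blast
  have mo1: "ancmono T1 T2 \<alpha>" using cont_iff_mono[OF m1 m2 h1] ct by blast
  have P2: "\<And>u1 u2. u1 \<in> pts T1 \<Longrightarrow> u2 \<in> pts T1 \<Longrightarrow> anc T2 (\<alpha> u1) (\<alpha> u2) \<Longrightarrow>
        anc T1 (shift T1 u1 (2 * \<epsilon>)) (shift T1 u2 (2 * \<epsilon>))" using g unfolding good_map_def by blast
  define I where "I = \<alpha> ` pts T1"
  have P3: "\<And>w. w \<in> pts T2 \<Longrightarrow> w \<notin> I \<Longrightarrow> \<exists>wF. lowest_anc_in T2 I w wF \<and> \<bar>snd wF - snd w\<bar> \<le> 2 * \<epsilon>"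
    using g unfolding good_map_def I_def by blast
  have apts: "\<alpha> u \<in> pts T2" "snd (\<alpha> u) = snd u + \<epsilon>" if "u \<in> pts T1" for u
    using h1 that unfolding hs_def by auto
  have upc: "z \<in> I" if y: "y \<in> I" and zy: "anc T2 z y" for y z
  proof -
    obtain u where u: "u \<in> pts T1" "y = \<alpha> u" using y unfolding I_def by blast
    define d where "d = snd z - snd y"
    have d: "0 \<le> d" using anc_pts(3)[OF zy] unfolding d_def by simp
    have "\<alpha> (shift T1 u d) = shift T2 (\<alpha> u) d" using commute_shift[OF m1 m2 h1 mo1 u(1) d] .
    also have "\<dots> = z" using shift_unique[OF m2 zy] u(2) unfolding d_def by simp
    finally show ?thesis unfolding I_def using shift_props(3)[OF m1 u(1) d] by (metis image_eqI)
  qed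
  have exF: "\<exists>z. lowest_anc_in T2 I w z \<and> snd z - snd w \<le> 2 * \<epsilon>" if w: "w \<in> pts T2" for w
  proof (cases "w \<in> I")
    case True
    have "lowest_anc_in T2 I w w" unfolding lowest_anc_in_def using True anc_refl[OF w] by blast
    then show ?thesis using e0 by (intro exI[of _ w]) simp
  next
    case False
    then show ?thesis using P3[OF w] by (meson abs_le_D1)
  qed
  define WF where "WF w = (SOME z. lowest_anc_in T2 I w z \<and> snd z - snd w \<le> 2 * \<epsilon>)" for w
  have WF: "lowest_anc_in T2 I w (WF w)" "snd (WF w) - snd w \<le> 2 * \<epsilon>" if "w \<in> pts T2" for w
    using someI_ex[OF exF[OF that]] unfolding WF_def by blast+
  have WFI: "WF w \<in> I" "anc T2 (WF w) w" if "w \<in> pts T2" for w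
    using WF(1)[OF that] unfolding lowest_anc_in_def by blast+
  have WF_in: "WF w = w" if "w \<in> pts T2" "w \<in> I" for w
  proof -
    have "lowest_anc_in T2 I w w" unfolding lowest_anc_in_def using that anc_refl[OF that(1)] by blast
    then show ?thesis using low_unique[OF m2 WF(1)[OF that(1)]] by blast
  qed
  define U where "U z = (SOME u. u \<in> pts T1 \<and> \<alpha> u = z)" for z
  have U: "U z \<in> pts T1" "\<alpha> (U z) = z" if "z \<in> I" for z
  proof -
    have "\<exists>u. u \<in> pts T1 \<and> \<alpha> u = z" using that unfolding I_def by blast
    from someI_ex[OF this] show "U z \<in> pts T1" "\<alpha> (U z) = z" unfolding U_def by blast+
  qed
  define \<beta> where "\<beta> w = shift T1 (U (WF w)) (snd w + 2 * \<epsilon> - snd (WF w))" for w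
  have bprops: "\<beta> w \<in> pts T1" "anc T1 (\<beta> w) (U (WF w))" "snd (\<beta> w) = snd w + \<epsilon>"
    "snd (U (WF w)) = snd (WF w) - \<epsilon>" if w: "w \<in> pts T2" for w
  proof -
    have z: "WF w \<in> I" "anc T2 (WF w) w" using WFI[OF w] by blast+
    have u: "U (WF w) \<in> pts T1" "\<alpha> (U (WF w)) = WF w" using U[OF z(1)] by blast+
    have su: "snd (U (WF w)) = snd (WF w) - \<epsilon>" using apts(2)[OF u(1)] u(2) by simp
    have o: "0 \<le> snd w + 2 * \<epsilon> - snd (WF w)" using WF(2)[OF w] by simp
    note sp = shift_props[OF m1 u(1) o]
    show "\<beta> w \<in> pts T1" "anc T1 (\<beta> w) (U (WF w))" using sp unfolding \<beta>_def by blast+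
    show "snd (\<beta> w) = snd w + \<epsilon>" using sp(2) su unfolding \<beta>_def by simp
    show "snd (U (WF w)) = snd (WF w) - \<epsilon>" using su .
  qed
  have h2: "hs T2 T1 \<epsilon> \<beta>" unfolding hs_def using bprops by blast
  have e1: "\<forall>u \<in> pts T1. \<beta> (\<alpha> u) = shift T1 u (2 * \<epsilon>)"
  proof
    fix u assume u: "u \<in> pts T1"
    have wI: "\<alpha> u \<in> I" unfolding I_def using u by blast
    have wf: "WF (\<alpha> u) = \<alpha> u" using WF_in[OF apts(1)[OF u] wI] .
    have u': "U (\<alpha> u) \<in> pts T1" "\<alpha> (U (\<alpha> u)) = \<alpha> u" using U[OF wI] by blast+
    have b: "\<beta> (\<alpha> u) = shift T1 (U (\<alpha> u)) (2 * \<epsilon>)" unfolding \<beta>_def wf by simp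
    have r: "anc T2 (\<alpha> u) (\<alpha> u)" using anc_refl[OF apts(1)[OF u]] .
    have "anc T1 (shift T1 u (2 * \<epsilon>)) (shift T1 (U (\<alpha> u)) (2 * \<epsilon>))" using P2[OF u u'(1)] r u'(2) by simp
    moreover have "anc T1 (shift T1 (U (\<alpha> u)) (2 * \<epsilon>)) (shift T1 u (2 * \<epsilon>))" using P2[OF u'(1) u] r u'(2) by simp
    ultimately show "\<beta> (\<alpha> u) = shift T1 u (2 * \<epsilon>)" using b anc_antisym[OF m1] by metis
  qed
  have e2: "\<forall>w \<in> pts T2. \<alpha> (\<beta> w) = shift T2 w (2 * \<epsilon>)"
  proof
    fix w assume w: "w \<in> pts T2"
    have z: "WF w \<in> I" "anc T2 (WF w) w" using WFI[OF w] by blast+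
    have u: "\<alpha> (U (WF w)) = WF w" using U[OF z(1)] by blast
    have "anc T2 (\<alpha> (\<beta> w)) (\<alpha> (U (WF w)))" using mo1 bprops(2)[OF w] unfolding ancmono_def by blast
    then have a: "anc T2 (\<alpha> (\<beta> w)) w" using anc_trans[OF _ z(2)] u by simp
    have "snd (\<alpha> (\<beta> w)) = snd w + 2 * \<epsilon>" using apts(2)[OF bprops(1)[OF w]] bprops(3)[OF w] by simp
    then show "\<alpha> (\<beta> w) = shift T2 w (2 * \<epsilon>)" using shift_unique[OF m2 a] by simp
  qed
  have mo2: "ancmono T2 T1 \<beta>" unfolding ancmono_def
  proof (intro allI impI)
    fix w1 w2 assume a12: "anc T2 w1 w2"
    have w1: "w1 \<in> pts T2" and w2: "w2 \<in> pts T2" using anc_pts[OF a12] by blast+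
    have s12: "snd w2 \<le> snd w1" using anc_pts(3)[OF a12] .
    define z2 where "z2 = WF w2"
    define u2 where "u2 = U z2"
    have z2: "z2 \<in> I" "anc T2 z2 w2" using WFI[OF w2] unfolding z2_def by blast+
    have u2: "u2 \<in> pts T1" "\<alpha> u2 = z2" using U[OF z2(1)] unfolding u2_def by blast+
    have su2: "snd u2 = snd z2 - \<epsilon>" using bprops(4)[OF w2] unfolding u2_def z2_def by simp
    have b2: "\<beta> w2 = shift T1 u2 (snd w2 + 2 * \<epsilon> - snd z2)" unfolding \<beta>_def u2_def z2_def ..
    have o2: "0 \<le> snd w2 + 2 * \<epsilon> - snd z2" using WF(2)[OF w2] unfolding z2_def by simp
    show "anc T1 (\<beta> w1) (\<beta> w2)"
    proof (cases "w1 \<in> I")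
      case True
      have wf1: "WF w1 = w1" using WF_in[OF w1 True] .
      define u1 where "u1 = U w1"
      have u1: "u1 \<in> pts T1" "\<alpha> u1 = w1" using U[OF True] unfolding u1_def by blast+
      have su1: "snd u1 = snd w1 - \<epsilon>" using apts(2)[OF u1(1)] u1(2) by simp
      have b1: "\<beta> w1 = shift T1 u1 (2 * \<epsilon>)" unfolding \<beta>_def wf1 u1_def by simp
      have w1z2: "anc T2 w1 z2" using WF(1)[OF w2] True a12 unfolding lowest_anc_in_def z2_def by blast
      define d where "d = snd u1 - snd u2"
      have dd: "d = snd w1 - snd z2" unfolding d_def using su1 su2 by simp
      have d: "0 \<le> d" using anc_pts(3)[OF w1z2] dd by simp
      define zz where "zz = shift T1 u2 d"
      have zz: "zz \<in> pts T1" unfolding zz_def using shift_props(3)[OF m1 u2(1) d] .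
      have "\<alpha> zz = shift T2 (\<alpha> u2) d" unfolding zz_def using commute_shift[OF m1 m2 h1 mo1 u2(1) d] .
      also have "\<dots> = w1" using shift_unique[OF m2 w1z2] u2(2) dd by simp
      finally have azz: "\<alpha> zz = \<alpha> u1" using u1(2) by simp
      have r: "anc T2 (\<alpha> u1) (\<alpha> u1)" using anc_refl[OF apts(1)[OF u1(1)]] .
      have "anc T1 (shift T1 zz (2 * \<epsilon>)) (shift T1 u1 (2 * \<epsilon>))" using P2[OF zz u1(1)] r azz by simp
      moreover have "anc T1 (shift T1 u1 (2 * \<epsilon>)) (shift T1 zz (2 * \<epsilon>))" using P2[OF u1(1) zz] r azz by simp
      ultimately have eqz: "shift T1 zz (2 * \<epsilon>) = shift T1 u1 (2 * \<epsilon>)" using anc_antisym[OF m1] by metis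
      have "shift T1 zz (2 * \<epsilon>) = shift T1 u2 (d + 2 * \<epsilon>)" unfolding zz_def using shift_add[OF m1 u2(1) d] e0 by simp
      then have b1': "\<beta> w1 = shift T1 u2 (d + 2 * \<epsilon>)" using eqz b1 by simp
      have "snd w2 + 2 * \<epsilon> - snd z2 \<le> d + 2 * \<epsilon>" using dd s12 by simp
      then show ?thesis using shift_mono[OF m1 u2(1) o2] b1' b2 by simp
    next
      case False
      have n2: "w2 \<notin> I" using upc[OF _ a12] False by blast
      have "lowest_anc_in T2 I w2 (WF w1)" unfolding lowest_anc_in_def
      proof (intro conjI ballI impI)
        show "WF w1 \<in> I" using WFI(1)[OF w1] .
        show "anc T2 (WF w1) w2" using anc_trans[OF WFI(2)[OF w1] a12] .
        fix z assume zI: "z \<in> I" and zw: "anc T2 z w2"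
        show "anc T2 z (WF w1)"
        proof (cases "snd z \<le> snd w1")
          case True
          then have "anc T2 w1 z" using anc_cmp[OF m2 zw a12] by simp
          then have "w1 \<in> I" using upc[OF zI] by blast
          then show ?thesis using False by blast
        next
          case nt: False
          then have "anc T2 z w1" using anc_cmp[OF m2 a12 zw] by simp
          then show ?thesis using WF(1)[OF w1] zI unfolding lowest_anc_in_def by blast
        qed
      qed
      then have same: "WF w1 = z2" using low_unique[OF m2 _ WF(1)[OF w2]] unfolding z2_def by blast
      have b1: "\<beta> w1 = shift T1 u2 (snd w1 + 2 * \<epsilon> - snd z2)" unfolding \<beta>_def same u2_def ..
      show ?thesis using shift_mono[OF m1 u2(1) o2, of "snd w1 + 2 * \<epsilon> - snd z2"] s12 b1 b2 by simp
    qed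
  qed
  have "compatible T1 T2 \<epsilon> \<alpha> \<beta>" unfolding compatible_iff[OF m1 m2]
    using h1 h2 mo1 mo2 e1 e2 by blast
  then show ?thesis by blast
qed

lemma vert_pt: "merge_tree T \<Longrightarrow> v \<in> verts T \<Longrightarrow> (v, hgt T v) \<in> pts T"
  using mt_hgt_par[of T v] by (simp add: pts_iff)

lemma compat_exists:
  fixes T1 :: "'a mtree" and T2 :: "'b mtree"
  assumes m1: "merge_tree T1" and m2: "merge_tree T2"
  shows "\<exists>e \<alpha> \<beta>. 0 \<le> e \<and> compatible T1 T2 e \<alpha> \<beta>"
proof -
  define n1 where "n1 = Min (hgt T1 ` verts T1)"
  define n2 where "n2 = Min (hgt T2 ` verts T2)"
  have n1: "n1 \<le> snd u" if "u \<in> pts T1" for u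
  proof -
    have "n1 \<le> hgt T1 (fst u)" unfolding n1_def using ptsD[OF that] mt_root(3)[OF m1] by simp
    then show ?thesis using ptsD[OF that] by simp
  qed
  have n2: "n2 \<le> snd u" if "u \<in> pts T2" for u
  proof -
    have "n2 \<le> hgt T2 (fst u)" unfolding n2_def using ptsD[OF that] mt_root(3)[OF m2] by simp
    then show ?thesis using ptsD[OF that] by simp
  qed
  define e where "e = \<bar>hgt T2 (root T2) - n1\<bar> + \<bar>hgt T1 (root T1) - n2\<bar>"
  have e0: "0 \<le> e" unfolding e_def by simp
  define \<alpha> where "\<alpha> u = (root T2, snd u + e)" for u :: "'a \<times> real"
  define \<beta> where "\<beta> w = (root T1, snd w + e)" for w :: "'b \<times> real"
  have h1: "hs T1 T2 e \<alpha>" unfolding hs_def \<alpha>_def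
  proof
    fix u assume u: "u \<in> pts T1"
    have "hgt T2 (root T2) \<le> snd u + e" using n1[OF u] unfolding e_def by linarith
    then show "(root T2, snd u + e) \<in> pts T2 \<and> snd (root T2, snd u + e) = snd u + e"
      using mt_root(1)[OF m2] by (simp add: pts_iff)
  qed
  have h2: "hs T2 T1 e \<beta>" unfolding hs_def \<beta>_def
  proof
    fix u assume u: "u \<in> pts T2"
    have "hgt T1 (root T1) \<le> snd u + e" using n2[OF u] unfolding e_def by linarith
    then show "(root T1, snd u + e) \<in> pts T1 \<and> snd (root T1, snd u + e) = snd u + e"
      using mt_root(1)[OF m1] by (simp add: pts_iff)
  qed
  have mo1: "ancmono T1 T2 \<alpha>" unfolding ancmono_def
  proof (intro allI impI)
    fix x y assume a: "anc T1 x y"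
    have "\<alpha> x \<in> pts T2" "\<alpha> y \<in> pts T2" using h1 anc_pts[OF a] unfolding hs_def by auto
    then show "anc T2 (\<alpha> x) (\<alpha> y)" unfolding anc_def \<alpha>_def using anc_pts(3)[OF a] by (simp add: vanc_refl)
  qed
  have mo2: "ancmono T2 T1 \<beta>" unfolding ancmono_def
  proof (intro allI impI)
    fix x y assume a: "anc T2 x y"
    have "\<beta> x \<in> pts T1" "\<beta> y \<in> pts T1" using h2 anc_pts[OF a] unfolding hs_def by auto
    then show "anc T1 (\<beta> x) (\<beta> y)" unfolding anc_def \<beta>_def using anc_pts(3)[OF a] by (simp add: vanc_refl)
  qed
  have e1: "\<forall>u \<in> pts T1. \<beta> (\<alpha> u) = shift T1 u (2 * e)"
  proof
    fix u assume u: "u \<in> pts T1"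
    have p: "\<beta> (\<alpha> u) \<in> pts T1" using h1 h2 u unfolding hs_def by auto
    have "anc T1 (\<beta> (\<alpha> u)) u" unfolding anc_def using p u vanc_root[OF m1 ptsD[OF u, THEN conjunct1]] e0
      unfolding \<alpha>_def \<beta>_def by simp
    moreover have "snd (\<beta> (\<alpha> u)) = snd u + 2 * e" unfolding \<alpha>_def \<beta>_def by simp
    ultimately show "\<beta> (\<alpha> u) = shift T1 u (2 * e)" using shift_unique[OF m1] by metis
  qed
  have e2: "\<forall>u \<in> pts T2. \<alpha> (\<beta> u) = shift T2 u (2 * e)"
  proof
    fix u assume u: "u \<in> pts T2"
    have p: "\<alpha> (\<beta> u) \<in> pts T2" using h1 h2 u unfolding hs_def by auto
    have "anc T2 (\<alpha> (\<beta> u)) u" unfolding anc_def using p u vanc_root[OF m2 ptsD[OF u, THEN conjunct1]] e0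
      unfolding \<alpha>_def \<beta>_def by simp
    moreover have "snd (\<alpha> (\<beta> u)) = snd u + 2 * e" unfolding \<alpha>_def \<beta>_def by simp
    ultimately show "\<alpha> (\<beta> u) = shift T2 u (2 * e)" using shift_unique[OF m2] by metis
  qed
  have "compatible T1 T2 e \<alpha> \<beta>" unfolding compatible_iff[OF m1 m2]
    using h1 h2 mo1 mo2 e1 e2 by blast
  then show ?thesis using e0 by blast
qed

lemma limit_map:
  assumes m1: "merge_tree T1" and m2: "merge_tree T2" and e0: "0 \<le> \<epsilon>"
    and small: "\<And>\<delta>. \<delta> > 0 \<Longrightarrow> \<exists>n\<in>Fb. e n - \<epsilon> < \<delta>"
    and pos: "\<And>n. n \<in> Fb \<Longrightarrow> \<epsilon> < e n"
    and hsA: "\<And>n. n \<in> Fb \<Longrightarrow> hs T1 T2 (e n) (A n)"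
    and moA: "\<And>n. n \<in> Fb \<Longrightarrow> ancmono T1 T2 (A n)"
    and sig: "\<And>n v. n \<in> Fb \<Longrightarrow> v \<in> verts T1 \<Longrightarrow> fst (A n (v, hgt T1 v)) = \<sigma> v"
  shows "\<exists>\<alpha>. hs T1 T2 \<epsilon> \<alpha> \<and> ancmono T1 T2 \<alpha> \<and> (\<forall>n\<in>Fb. \<forall>u\<in>pts T1. A n u = shift T2 (\<alpha> u) (e n - \<epsilon>))"
proof -
  obtain n0 where n0: "n0 \<in> Fb" using small[of 1] by auto
  define a0 where "a0 v = (\<sigma> v, hgt T1 v + \<epsilon>)" for v
  have An: "A n (v, hgt T1 v) = (\<sigma> v, hgt T1 v + e n)" "(\<sigma> v, hgt T1 v + e n) \<in> pts T2"
    if "n \<in> Fb" "v \<in> verts T1" for n v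
  proof -
    have "A n (v, hgt T1 v) \<in> pts T2" "snd (A n (v, hgt T1 v)) = hgt T1 v + e n"
      using hsA[OF that(1)] vert_pt[OF m1 that(2)] unfolding hs_def by auto
    then show eq: "A n (v, hgt T1 v) = (\<sigma> v, hgt T1 v + e n)"
      using sig[OF that] by (simp add: prod_eq_iff)
    show "(\<sigma> v, hgt T1 v + e n) \<in> pts T2" using eq \<open>A n (v, hgt T1 v) \<in> pts T2\<close> by simp
  qed
  have a0: "a0 v \<in> pts T2" if v: "v \<in> verts T1" for v
  proof -
    have "\<sigma> v \<in> verts T2" using An(2)[OF n0 v] by (simp add: pts_iff)
    moreover have "hgt T2 (\<sigma> v) \<le> hgt T1 v + \<epsilon>"
    proof (rule field_le_epsilon)
      fix \<delta> :: real assume "\<delta> > 0"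
      then obtain n where n: "n \<in> Fb" "e n - \<epsilon> < \<delta>" using small by blast
      have "hgt T2 (\<sigma> v) \<le> hgt T1 v + e n" using An(2)[OF n(1) v] by (simp add: pts_iff)
      then show "hgt T2 (\<sigma> v) \<le> hgt T1 v + \<epsilon> + \<delta>" using n(2) by simp
    qed
    moreover have "\<sigma> v \<noteq> root T2 \<longrightarrow> hgt T1 v + \<epsilon> < hgt T2 (par T2 (\<sigma> v))"
      using An(2)[OF n0 v] pos[OF n0] unfolding pts_iff by fastforce
    ultimately show ?thesis unfolding a0_def by (simp add: pts_iff)
  qed
  have anca0: "anc T2 (\<sigma> v, hgt T1 v + e n) (a0 v)" if "n \<in> Fb" "v \<in> verts T1" for n v
    unfolding anc_def a0_def using An(2)[OF that] a0[OF that(2)] pos[OF that(1)]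
    unfolding a0_def by (simp add: vanc_refl)
  define \<alpha> where "\<alpha> u = shift T2 (a0 (fst u)) (snd u - hgt T1 (fst u))" for u
  have al: "\<alpha> u \<in> pts T2" "anc T2 (\<alpha> u) (a0 (fst u))" "snd (\<alpha> u) = snd u + \<epsilon>" if u: "u \<in> pts T1" for u
  proof -
    have v: "fst u \<in> verts T1" "0 \<le> snd u - hgt T1 (fst u)" using ptsD[OF u] by auto
    note sp = shift_props[OF m2 a0[OF v(1)] v(2)]
    show "\<alpha> u \<in> pts T2" "anc T2 (\<alpha> u) (a0 (fst u))" using sp unfolding \<alpha>_def by blast+
    show "snd (\<alpha> u) = snd u + \<epsilon>" using sp(2) unfolding \<alpha>_def a0_def by simp
  qed
  have hs1: "hs T1 T2 \<epsilon> \<alpha>" unfolding hs_def using al by blast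
  have rel: "A n u = shift T2 (\<alpha> u) (e n - \<epsilon>)" if n: "n \<in> Fb" and u: "u \<in> pts T1" for n u
  proof -
    define v where "v = fst u"
    have v: "v \<in> verts T1" using ptsD[OF u] unfolding v_def by blast
    have uu: "anc T1 u (v, hgt T1 v)" unfolding anc_def v_def using u vert_pt[OF m1 v] ptsD[OF u]
      unfolding v_def by (simp add: vanc_refl)
    have "anc T2 (A n u) (A n (v, hgt T1 v))" using moA[OF n] uu unfolding ancmono_def by blast
    then have "anc T2 (A n u) (a0 v)" using An(1)[OF n v] anca0[OF n v] anc_trans by metis
    moreover have d: "0 \<le> e n - \<epsilon>" using pos[OF n] by simp
    have "anc T2 (shift T2 (\<alpha> u) (e n - \<epsilon>)) (a0 v)"
      using anc_trans[OF shift_props(1)[OF m2 al(1)[OF u] d] al(2)[OF u]] unfolding v_def .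
    moreover have "snd (A n u) = snd (shift T2 (\<alpha> u) (e n - \<epsilon>))"
      using hsA[OF n] u shift_props(2)[OF m2 al(1)[OF u] d] al(3)[OF u] unfolding hs_def by simp
    ultimately show ?thesis using anc_unique[OF m2] by metis
  qed
  have mo1: "ancmono T1 T2 \<alpha>" unfolding ancmono_def
  proof (intro allI impI)
    fix x y assume a: "anc T1 x y"
    have x: "x \<in> pts T1" and y: "y \<in> pts T1" using anc_pts[OF a] by blast+
    show "anc T2 (\<alpha> x) (\<alpha> y)"
    proof (rule close_anc[OF m2 al(1)[OF x] al(1)[OF y]])
      show "snd (\<alpha> y) \<le> snd (\<alpha> x)" using al(3)[OF x] al(3)[OF y] anc_pts(3)[OF a] by simp
      fix \<delta> :: real assume "\<delta> > 0"
      then obtain n where n: "n \<in> Fb" "e n - \<epsilon> < \<delta>" using small by blast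
      have "anc T2 (A n x) (A n y)" using moA[OF n(1)] a unfolding ancmono_def by blast
      then have "anc T2 (shift T2 (\<alpha> x) (e n - \<epsilon>)) (shift T2 (\<alpha> y) (e n - \<epsilon>))" using rel[OF n(1) x] rel[OF n(1) y] by simp
      then show "\<exists>d\<ge>0. d < \<delta> \<and> anc T2 (shift T2 (\<alpha> x) d) (shift T2 (\<alpha> y) d)"
        using n(2) pos[OF n(1)] by (intro exI[of _ "e n - \<epsilon>"]) simp
    qed
  qed
  show ?thesis using hs1 mo1 rel by blast
qed

lemma compat_limit:
  assumes m1: "merge_tree T1" and m2: "merge_tree T2" and e0: "0 \<le> \<epsilon>"
    and seq: "\<And>n. \<epsilon> < e n \<and> e n < \<epsilon> + 1 / real (Suc n) \<and> compatible T1 T2 (e n) (A n) (B n)"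
  shows "\<exists>\<alpha> \<beta>. compatible T1 T2 \<epsilon> \<alpha> \<beta>"
proof -
  have cc: "hs T1 T2 (e n) (A n) \<and> hs T2 T1 (e n) (B n) \<and> ancmono T1 T2 (A n) \<and> ancmono T2 T1 (B n) \<and>
     (\<forall>u \<in> pts T1. B n (A n u) = shift T1 u (2 * e n)) \<and> (\<forall>w \<in> pts T2. A n (B n w) = shift T2 w (2 * e n))" for n
    using seq[of n] unfolding compatible_iff[OF m1 m2] by blast
  define K where "K n = (restrict (\<lambda>v. fst (A n (v, hgt T1 v))) (verts T1), restrict (\<lambda>w. fst (B n (w, hgt T2 w))) (verts T2))" for n
  have Kr: "range K \<subseteq> (PiE (verts T1) (\<lambda>_. verts T2)) \<times> (PiE (verts T2) (\<lambda>_. verts T1))"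
  proof
    fix k assume "k \<in> range K"
    then obtain n where n: "k = K n" by blast
    have "A n (v, hgt T1 v) \<in> pts T2" if "v \<in> verts T1" for v using cc[of n] vert_pt[OF m1 that] unfolding hs_def by blast
    then have 1: "\<forall>v\<in>verts T1. fst (A n (v, hgt T1 v)) \<in> verts T2" using ptsD by blast
    have "B n (v, hgt T2 v) \<in> pts T1" if "v \<in> verts T2" for v using cc[of n] vert_pt[OF m2 that] unfolding hs_def by blast
    then have 2: "\<forall>v\<in>verts T2. fst (B n (v, hgt T2 v)) \<in> verts T1" using ptsD by blast
    show "k \<in> (PiE (verts T1) (\<lambda>_. verts T2)) \<times> (PiE (verts T2) (\<lambda>_. verts T1))"
      unfolding n K_def using 1 2 by simp
  qed
  have "finite ((PiE (verts T1) (\<lambda>_. verts T2)) \<times> (PiE (verts T2) (\<lambda>_. verts T1)))"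
    using mt_root(3)[OF m1] mt_root(3)[OF m2] by (simp add: finite_PiE)
  then have "finite (range K)" using Kr finite_subset by blast
  then obtain y where "infinite (K -` {y})" using inf_img_fin_dom[of K UNIV] by blast
  define Fb where "Fb = K -` {y}"
  have Finf: "infinite Fb" unfolding Fb_def by fact
  define \<sigma> where "\<sigma> = fst y"
  define \<tau> where "\<tau> = snd y"
  have sig: "fst (A n (v, hgt T1 v)) = \<sigma> v" if "n \<in> Fb" "v \<in> verts T1" for n v
  proof -
    have "K n = y" using that unfolding Fb_def by simp
    then have "\<sigma> v = restrict (\<lambda>v. fst (A n (v, hgt T1 v))) (verts T1) v" unfolding \<sigma>_def K_def by auto
    then show ?thesis using that by simp
  qed
  have tau: "fst (B n (v, hgt T2 v)) = \<tau> v" if "n \<in> Fb" "v \<in> verts T2" for n v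
  proof -
    have "K n = y" using that unfolding Fb_def by simp
    then have "\<tau> v = restrict (\<lambda>v. fst (B n (v, hgt T2 v))) (verts T2) v" unfolding \<tau>_def K_def by auto
    then show ?thesis using that by simp
  qed
  have small: "\<exists>n\<in>Fb. e n - \<epsilon> < \<delta>" if dp: "\<delta> > 0" for \<delta>
  proof -
    obtain N where N: "inverse (real (Suc N)) < \<delta>" using reals_Archimedean[OF dp] by blast
    obtain n where n: "n \<ge> N" "n \<in> Fb" using Finf unfolding infinite_nat_iff_unbounded_le by blast
    have "1 / real (Suc n) \<le> 1 / real (Suc N)" using n(1) by (simp add: frac_le)
    then have "e n - \<epsilon> < \<delta>" using seq[of n] N by (simp add: inverse_eq_divide)
    then show ?thesis using n(2) by blast
  qed
  have pos: "\<epsilon> < e n" for n using seq[of n] by blast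
  obtain \<alpha> where \<alpha>: "hs T1 T2 \<epsilon> \<alpha>" "ancmono T1 T2 \<alpha>" "\<forall>n\<in>Fb. \<forall>u\<in>pts T1. A n u = shift T2 (\<alpha> u) (e n - \<epsilon>)"
    using limit_map[OF m1 m2 e0, of Fb e A \<sigma>] small pos cc sig by blast
  obtain \<beta> where \<beta>: "hs T2 T1 \<epsilon> \<beta>" "ancmono T2 T1 \<beta>" "\<forall>n\<in>Fb. \<forall>u\<in>pts T2. B n u = shift T1 (\<beta> u) (e n - \<epsilon>)"
    using limit_map[OF m2 m1 e0, of Fb e B \<tau>] small pos cc tau by blast
  have e1: "\<forall>u \<in> pts T1. \<beta> (\<alpha> u) = shift T1 u (2 * \<epsilon>)"
  proof
    fix u assume u: "u \<in> pts T1"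
    have au: "\<alpha> u \<in> pts T2" using \<alpha>(1) u unfolding hs_def by blast
    have P: "\<beta> (\<alpha> u) \<in> pts T1" "snd (\<beta> (\<alpha> u)) = snd u + 2 * \<epsilon>" using \<alpha>(1) \<beta>(1) u unfolding hs_def by auto
    have e2: "0 \<le> 2 * \<epsilon>" using e0 by simp
    note Q = shift_props[OF m1 u e2]
    show "\<beta> (\<alpha> u) = shift T1 u (2 * \<epsilon>)"
    proof (rule close_eq[OF m1 P(1) Q(3)])
      show "snd (\<beta> (\<alpha> u)) = snd (shift T1 u (2 * \<epsilon>))" using P Q by simp
      fix \<delta> :: real assume "\<delta> > 0"
      then obtain n where n: "n \<in> Fb" "e n - \<epsilon> < \<delta> / 2" using small[of "\<delta> / 2"] by auto
      define d where "d = e n - \<epsilon>"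
      have d: "0 \<le> d" using pos[of n] unfolding d_def by simp
      have "B n (A n u) = B n (shift T2 (\<alpha> u) d)" using \<alpha>(3) n(1) u unfolding d_def by simp
      also have "\<dots> = shift T1 (B n (\<alpha> u)) d" using commute_shift[OF m2 m1 _ _ au d] cc[of n] by blast
      also have "B n (\<alpha> u) = shift T1 (\<beta> (\<alpha> u)) d" using \<beta>(3) n(1) au unfolding d_def by simp
      also have "shift T1 (shift T1 (\<beta> (\<alpha> u)) d) d = shift T1 (\<beta> (\<alpha> u)) (d + d)" using shift_add[OF m1 P(1) d d] .
      finally have z1: "B n (A n u) = shift T1 (\<beta> (\<alpha> u)) (d + d)" .
      have "B n (A n u) = shift T1 u (2 * e n)" using cc[of n] u by blast
      also have "\<dots> = shift T1 (shift T1 u (2 * \<epsilon>)) (d + d)"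
        using shift_add[OF m1 u e2, of "d + d"] d unfolding d_def by simp
      finally have z2: "B n (A n u) = shift T1 (shift T1 u (2 * \<epsilon>)) (d + d)" .
      have dd: "0 \<le> d + d" using d by simp
      have "anc T1 (B n (A n u)) (\<beta> (\<alpha> u))" "anc T1 (B n (A n u)) (shift T1 u (2 * \<epsilon>))"
        "snd (B n (A n u)) < snd (\<beta> (\<alpha> u)) + \<delta>"
        using shift_props[OF m1 P(1) dd] shift_props[OF m1 Q(3) dd] z1 z2 n(2) unfolding d_def by auto
      then show "\<exists>z. anc T1 z (\<beta> (\<alpha> u)) \<and> anc T1 z (shift T1 u (2 * \<epsilon>)) \<and> snd z < snd (\<beta> (\<alpha> u)) + \<delta>" by blast
    qed
  qed
  have e2: "\<forall>u \<in> pts T2. \<alpha> (\<beta> u) = shift T2 u (2 * \<epsilon>)"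
  proof
    fix u assume u: "u \<in> pts T2"
    have au: "\<beta> u \<in> pts T1" using \<beta>(1) u unfolding hs_def by blast
    have P: "\<alpha> (\<beta> u) \<in> pts T2" "snd (\<alpha> (\<beta> u)) = snd u + 2 * \<epsilon>" using \<alpha>(1) \<beta>(1) u unfolding hs_def by auto
    have e2: "0 \<le> 2 * \<epsilon>" using e0 by simp
    note Q = shift_props[OF m2 u e2]
    show "\<alpha> (\<beta> u) = shift T2 u (2 * \<epsilon>)"
    proof (rule close_eq[OF m2 P(1) Q(3)])
      show "snd (\<alpha> (\<beta> u)) = snd (shift T2 u (2 * \<epsilon>))" using P Q by simp
      fix \<delta> :: real assume "\<delta> > 0"
      then obtain n where n: "n \<in> Fb" "e n - \<epsilon> < \<delta> / 2" using small[of "\<delta> / 2"] by auto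
      define d where "d = e n - \<epsilon>"
      have d: "0 \<le> d" using pos[of n] unfolding d_def by simp
      have "A n (B n u) = A n (shift T1 (\<beta> u) d)" using \<beta>(3) n(1) u unfolding d_def by simp
      also have "\<dots> = shift T2 (A n (\<beta> u)) d" using commute_shift[OF m1 m2 _ _ au d] cc[of n] by blast
      also have "A n (\<beta> u) = shift T2 (\<alpha> (\<beta> u)) d" using \<alpha>(3) n(1) au unfolding d_def by simp
      also have "shift T2 (shift T2 (\<alpha> (\<beta> u)) d) d = shift T2 (\<alpha> (\<beta> u)) (d + d)" using shift_add[OF m2 P(1) d d] .
      finally have z1: "A n (B n u) = shift T2 (\<alpha> (\<beta> u)) (d + d)" .
      have "A n (B n u) = shift T2 u (2 * e n)" using cc[of n] u by blast
      also have "\<dots> = shift T2 (shift T2 u (2 * \<epsilon>)) (d + d)"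
        using shift_add[OF m2 u e2, of "d + d"] d unfolding d_def by simp
      finally have z2: "A n (B n u) = shift T2 (shift T2 u (2 * \<epsilon>)) (d + d)" .
      have dd: "0 \<le> d + d" using d by simp
      have "anc T2 (A n (B n u)) (\<alpha> (\<beta> u))" "anc T2 (A n (B n u)) (shift T2 u (2 * \<epsilon>))"
        "snd (A n (B n u)) < snd (\<alpha> (\<beta> u)) + \<delta>"
        using shift_props[OF m2 P(1) dd] shift_props[OF m2 Q(3) dd] z1 z2 n(2) unfolding d_def by auto
      then show "\<exists>z. anc T2 z (\<alpha> (\<beta> u)) \<and> anc T2 z (shift T2 u (2 * \<epsilon>)) \<and> snd z < snd (\<alpha> (\<beta> u)) + \<delta>" by blast
    qed
  qed
  have "compatible T1 T2 \<epsilon> \<alpha> \<beta>" unfolding compatible_iff[OF m1 m2]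
    using \<alpha> \<beta> e1 e2 by blast
  then show ?thesis by blast
qed

theorem theorem1:
  fixes T1 :: "'a mtree" and T2 :: "'b mtree" and \<epsilon> :: real
  assumes "merge_tree T1" and "merge_tree T2" and "0 \<le> \<epsilon>"
  shows "interleaving_dist T1 T2 \<le> \<epsilon> \<longleftrightarrow> (\<exists>\<alpha>. good_map T1 T2 \<epsilon> \<alpha>)"
proof -
  note m1 = assms(1) and m2 = assms(2) and e0 = assms(3)
  define S where "S = {e. 0 \<le> e \<and> (\<exists>\<alpha> \<beta>. compatible T1 T2 e \<alpha> \<beta>)}"
  have dist: "interleaving_dist T1 T2 = Inf S" unfolding interleaving_dist_def S_def ..
  have Sbdd: "bdd_below S" unfolding S_def bdd_below_def by blast
  have Sne: "S \<noteq> {}" using compat_exists[OF m1 m2] unfolding S_def by blast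
  show ?thesis
  proof
    assume "\<exists>\<alpha>. good_map T1 T2 \<epsilon> \<alpha>"
    then obtain \<alpha> where "good_map T1 T2 \<epsilon> \<alpha>" by blast
    then have "\<epsilon> \<in> S" using good_compat[OF m1 m2 e0] e0 unfolding S_def by blast
    then show "interleaving_dist T1 T2 \<le> \<epsilon>" unfolding dist by (rule cInf_lower[OF _ Sbdd])
  next
    assume le: "interleaving_dist T1 T2 \<le> \<epsilon>"
    have "\<exists>\<alpha> \<beta>. compatible T1 T2 \<epsilon> \<alpha> \<beta>"
    proof (cases "\<exists>e\<in>S. e \<le> \<epsilon>")
      case True
      then obtain e \<alpha> \<beta> where "0 \<le> e" "e \<le> \<epsilon>" "compatible T1 T2 e \<alpha> \<beta>" unfolding S_def by blast
      then show ?thesis using compat_up[OF m1 m2] by blast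
    next
      case False
      have "\<exists>e. e \<in> S \<and> e < \<epsilon> + 1 / real (Suc n)" for n
      proof -
        have "Inf S < \<epsilon> + 1 / real (Suc n)" using le unfolding dist
          by (smt (verit) of_nat_0_less_iff zero_less_Suc divide_pos_pos)
        then show ?thesis using cInf_lessD[OF Sne] by blast
      qed
      then obtain ef where ef: "\<And>n. ef n \<in> S \<and> ef n < \<epsilon> + 1 / real (Suc n)" by metis
      have "\<exists>p. compatible T1 T2 (ef n) (fst p) (snd p)" for n using ef[of n] unfolding S_def by auto
      then obtain P where P: "\<And>n. compatible T1 T2 (ef n) (fst (P n)) (snd (P n))" by metis
      have "\<epsilon> < ef n" for n using False ef[of n] by force
      then show ?thesis using compat_limit[OF m1 m2 e0, of ef "\<lambda>n. fst (P n)" "\<lambda>n. snd (P n)"] ef P by blast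
    qed
    then show "\<exists>\<alpha>. good_map T1 T2 \<epsilon> \<alpha>" using compat_good[OF m1 m2 e0] by blast
  qed
qed

end
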